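(* Let $A\in\mathbb{R}_{\max}^{n\times n}$ with $\lambda(A)=0$, let $g=g(\mathrm{crit}(A))$, assume $T_1(A)=\mathrm{DM}(g,n)$ and that $\mathrm{crit}(A)$ contains, up to choice of first node, a unique cycle $Z_0$ of length $g$. Then in any interesting walk each node of $Z_0$ occurs exactly $g$ times and each node not in $Z_0$ occurs exactly $g+1$ times.
   Context: Max-plus semiring $\mathbb{R}_{\max}=\mathbb{R}\cup\{-\infty\}$ with $a\oplus b=\max(a,b)$, $a\otimes b=a+b$; $(AB)_{ij}=\max_k(a_{ik}+b_{kj})$; $A^t$ is the $t$-th max-plus power, $A^0=I$. $\mathcal{D}(A)$ is the digraph on $\{1,\dots,n\}$ with arc $(i,j)$ of weight $a_{ij}$ whenever $a_{ij}\ne-\infty$. A walk is a node sequence whose consecutive pairs are arcs, its length is its number of arcs and its weight the sum of its arc weights; cycles are closed walks with no proper closed subwalk. $\lambda(A)$ is the maximal cycle mean. $\mathrm{crit}(A)$ is the subgraph of all nodes and arcs of cycles attaining $\lambda(A)$; its nodes are critical. $g(\mathrm{crit}(A))$ is the maximum over strongly connected components of $\mathrm{crit}(A)$ of their minimal cycle length. The cyclicity of $\mathrm{crit}(A)$ is the lcm over components of the gcd of their cycle lengths. CSR terms: with $\gamma$ the cyclicity of $\mathrm{crit}(A)$ and $\lambda(A)=0$, $M=I\oplus N\oplus\dots\oplus N^{n-1}$ where $N=A^\gamma$: $c_{ij}=m_{ij}$ if $j$ critical, else $-\infty$; $r_{ij}=m_{ij}$ if $i$ critical, else $-\infty$; $s_{ij}=a_{ij}$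 if $(i,j)$ is an arc of $\mathrm{crit}(A)$, else $-\infty$; $CS^tR[A]$ is the product $CS^tR$. $B_N$ has $(B_N)_{ij}=-\infty$ if $i$ or $j$ is critical and $a_{ij}$ otherwise. $T_1(A)$ is the least $T\ge0$ with $A^t=CS^tR[A]\oplus B_N^t$ for all $t\ge T$. $\mathrm{DM}(g,n)=g(n-2)+n$. Twice optimal / interesting walks: a walk $W$ from $i$ to $j$ passing through at least one node of $Z_0$ is twice optimal if it has maximal weight among all walks from $i$ to $j$ passing through a node of $Z_0$ whose length is congruent to the length of $W$ modulo $g$, and has minimal length among all such walks of maximal weight. It is interesting if it is twice optimal and has length $\mathrm{DM}(g,n)+g-1$. *)

theory Defs
  imports "HOL-Library.Extended_Real"
begin

text \<open>Max-plus matrices of size n are functions nat => nat => ereal, only entries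
with indices < n are relevant (nodes are 0..n-1). The value -infinity is the
max-plus zero; +infinity never occurs (assumed in the theorem).\<close>

type_synonym mpmat = "nat \<Rightarrow> nat \<Rightarrow> ereal"

definition mp_mult :: "nat \<Rightarrow> mpmat \<Rightarrow> mpmat \<Rightarrow> mpmat" where
  "mp_mult n X Y = (\<lambda>i j. SUP k\<in>{..<n}. X i k + Y k j)"

definition mp_id :: mpmat where
  "mp_id = (\<lambda>i j. if i = j then 0 else -\<infinity>)"

fun mp_pow :: "nat \<Rightarrow> mpmat \<Rightarrow> nat \<Rightarrow> mpmat" where
  "mp_pow n X 0 = mp_id"
| "mp_pow n X (Suc t) = mp_mult n (mp_pow n X t) X"

definition mp_add :: "mpmat \<Rightarrow> mpmat \<Rightarrow> mpmat" where
  "mp_add X Y = (\<lambda>i j. max (X i j) (Y i j))"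

definition warcs :: "nat list \<Rightarrow> (nat \<times> nat) list" where
  "warcs w = zip w (tl w)"

definition wlen :: "nat list \<Rightarrow> nat" where
  "wlen w = length w - 1"

definition wweight :: "mpmat \<Rightarrow> nat list \<Rightarrow> ereal" where
  "wweight A w = sum_list (map (\<lambda>(i,j). A i j) (warcs w))"

definition is_walk :: "nat \<Rightarrow> mpmat \<Rightarrow> nat list \<Rightarrow> bool" where
  "is_walk n A w \<longleftrightarrow> w \<noteq> [] \<and> set w \<subseteq> {..<n} \<and> (\<forall>(i,j)\<in>set (warcs w). A i j \<noteq> -\<infinity>)"

text \<open>Cycle: closed walk of positive length with no proper closed subwalk,
i.e. all nodes except the repeated first/last one are distinct.\<close>

definition is_cycle :: "nat \<Rightarrow> mpmat \<Rightarrow> nat list \<Rightarrow> bool" where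
  "is_cycle n A c \<longleftrightarrow> is_walk n A c \<and> length c \<ge> 2 \<and> hd c = last c \<and> distinct (butlast c)"

definition cmean :: "mpmat \<Rightarrow> nat list \<Rightarrow> ereal" where
  "cmean A c = wweight A c / ereal (real (wlen c))"

definition mcm :: "nat \<Rightarrow> mpmat \<Rightarrow> ereal" where
  "mcm n A = (SUP c\<in>{c. is_cycle n A c}. cmean A c)"

definition crit_cycle :: "nat \<Rightarrow> mpmat \<Rightarrow> nat list \<Rightarrow> bool" where
  "crit_cycle n A c \<longleftrightarrow> is_cycle n A c \<and> cmean A c = mcm n A"

definition crit_arcs :: "nat \<Rightarrow> mpmat \<Rightarrow> (nat \<times> nat) set" where
  "crit_arcs n A = (\<Union>c\<in>{c. crit_cycle n A c}. set (warcs c))"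

definition crit_nodes :: "nat \<Rightarrow> mpmat \<Rightarrow> nat set" where
  "crit_nodes n A = (\<Union>c\<in>{c. crit_cycle n A c}. set c)"

definition crit_walk :: "nat \<Rightarrow> mpmat \<Rightarrow> nat list \<Rightarrow> bool" where
  "crit_walk n A w \<longleftrightarrow> is_walk n A w \<and> set w \<subseteq> crit_nodes n A \<and> set (warcs w) \<subseteq> crit_arcs n A"

definition crit_graph_cycle :: "nat \<Rightarrow> mpmat \<Rightarrow> nat list \<Rightarrow> bool" where
  "crit_graph_cycle n A c \<longleftrightarrow> is_cycle n A c \<and> set (warcs c) \<subseteq> crit_arcs n A"

definition crit_reach :: "nat \<Rightarrow> mpmat \<Rightarrow> nat \<Rightarrow> nat \<Rightarrow> bool" where
  "crit_reach n A i j \<longleftrightarrow> (\<exists>w. crit_walk n A w \<and> hd w = i \<and> last w = j)"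

definition crit_comp :: "nat \<Rightarrow> mpmat \<Rightarrow> nat \<Rightarrow> nat set" where
  "crit_comp n A i = {j \<in> crit_nodes n A. crit_reach n A i j \<and> crit_reach n A j i}"

definition crit_comps :: "nat \<Rightarrow> mpmat \<Rightarrow> nat set set" where
  "crit_comps n A = crit_comp n A ` crit_nodes n A"

definition comp_cycle_lengths :: "nat \<Rightarrow> mpmat \<Rightarrow> nat set \<Rightarrow> nat set" where
  "comp_cycle_lengths n A C = {wlen c | c. crit_graph_cycle n A c \<and> set c \<subseteq> C}"

definition g_crit :: "nat \<Rightarrow> mpmat \<Rightarrow> nat" where
  "g_crit n A = Max ((\<lambda>C. Min (comp_cycle_lengths n A C)) ` crit_comps n A)"

definition cyclicity :: "nat \<Rightarrow> mpmat \<Rightarrow> nat" where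
  "cyclicity n A = Lcm ((\<lambda>C. Gcd (comp_cycle_lengths n A C)) ` crit_comps n A)"

definition M_mat :: "nat \<Rightarrow> mpmat \<Rightarrow> mpmat" where
  "M_mat n A = (\<lambda>i j. SUP k\<in>{..<n}. mp_pow n (mp_pow n A (cyclicity n A)) k i j)"

definition C_mat :: "nat \<Rightarrow> mpmat \<Rightarrow> mpmat" where
  "C_mat n A = (\<lambda>i j. if j \<in> crit_nodes n A then M_mat n A i j else -\<infinity>)"

definition R_mat :: "nat \<Rightarrow> mpmat \<Rightarrow> mpmat" where
  "R_mat n A = (\<lambda>i j. if i \<in> crit_nodes n A then M_mat n A i j else -\<infinity>)"

definition S_mat :: "nat \<Rightarrow> mpmat \<Rightarrow> mpmat" where
  "S_mat n A = (\<lambda>i j. if (i,j) \<in> crit_arcs n A then A i j else -\<infinity>)"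

definition CSR :: "nat \<Rightarrow> mpmat \<Rightarrow> nat \<Rightarrow> mpmat" where
  "CSR n A t = mp_mult n (mp_mult n (C_mat n A) (mp_pow n (S_mat n A) t)) (R_mat n A)"

definition B_N :: "nat \<Rightarrow> mpmat \<Rightarrow> mpmat" where
  "B_N n A = (\<lambda>i j. if i \<in> crit_nodes n A \<or> j \<in> crit_nodes n A then -\<infinity> else A i j)"

definition T1_property :: "nat \<Rightarrow> mpmat \<Rightarrow> nat \<Rightarrow> bool" where
  "T1_property n A T \<longleftrightarrow> (\<forall>t\<ge>T. \<forall>i<n. \<forall>j<n.
      mp_pow n A t i j = mp_add (CSR n A t) (mp_pow n (B_N n A) t) i j)"

definition is_T1 :: "nat \<Rightarrow> mpmat \<Rightarrow> nat \<Rightarrow> bool" where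
  "is_T1 n A T \<longleftrightarrow> T1_property n A T \<and> (\<forall>T'. T1_property n A T' \<longrightarrow> T \<le> T')"

definition DM :: "nat \<Rightarrow> nat \<Rightarrow> int" where
  "DM g n = int g * (int n - 2) + int n"

definition comparable_walk :: "nat \<Rightarrow> mpmat \<Rightarrow> nat list \<Rightarrow> nat \<Rightarrow> nat list \<Rightarrow> nat list \<Rightarrow> bool" where
  "comparable_walk n A Z0 g W V \<longleftrightarrow> is_walk n A V \<and> hd V = hd W \<and> last V = last W
      \<and> set V \<inter> set Z0 \<noteq> {} \<and> wlen V mod g = wlen W mod g"

definition twice_optimal :: "nat \<Rightarrow> mpmat \<Rightarrow> nat list \<Rightarrow> nat \<Rightarrow> nat list \<Rightarrow> bool" where
  "twice_optimal n A Z0 g W \<longleftrightarrow> is_walk n A W \<and> set W \<inter> set Z0 \<noteq> {}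
     \<and> (\<forall>V. comparable_walk n A Z0 g W V \<longrightarrow> wweight A V \<le> wweight A W)
     \<and> (\<forall>V. comparable_walk n A Z0 g W V \<and> wweight A V = wweight A W \<longrightarrow> wlen W \<le> wlen V)"

definition interesting :: "nat \<Rightarrow> mpmat \<Rightarrow> nat list \<Rightarrow> nat \<Rightarrow> nat list \<Rightarrow> bool" where
  "interesting n A Z0 g W \<longleftrightarrow> twice_optimal n A Z0 g W \<and> int (wlen W) = DM g n + int g - 1"

end

theory Submission
  imports Defs "HOL-Library.Multiset"
begin
lemma warcs_append: "warcs (xs @ x # ys) = warcs (xs @ [x]) @ warcs (x # ys)"
proof (induction xs)
  case Nil then show ?case by (simp add: warcs_def)
next
  case (Cons a xs) then show ?case by (cases xs) (auto simp: warcs_def)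
qed

lemma wlen_warcs: "wlen w = length (warcs w)" by (simp add: wlen_def warcs_def)

lemma warcs_F: "warcs (xs @ concat (map (Cons v) segs) @ v # ys) =
   warcs (xs @ [v]) @ concat (map (\<lambda>s. warcs (v # s @ [v])) segs) @ warcs (v # ys)"
proof (induction segs arbitrary: xs)
  case Nil then show ?case using warcs_append[of xs v ys] by simp
next
  case (Cons s segs)
  have "xs @ concat (map (Cons v) (s # segs)) @ v # ys = (xs @ v # s) @ concat (map (Cons v) segs) @ v # ys" by simp
  then show ?case using Cons[of "xs @ v # s"] warcs_append[of xs v "s @ [v]"] by simp
qed

lemma decomp: "Suc m \<le> count_list W v \<Longrightarrow> \<exists>xs segs ys. W = xs @ concat (map (Cons v) segs) @ v # ys \<and> length segs = m"
proof (induction m arbitrary: W)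
  case 0
  then have "v \<in> set W" by (metis count_list_0_iff not_less_eq_eq zero_le)
  then obtain xs ys where "W = xs @ v # ys" by (meson split_list)
  then show ?case by (intro exI[of _ xs] exI[of _ "[]"] exI[of _ ys]) simp
next
  case (Suc m)
  then have "v \<in> set W" by (metis count_list_0_iff not_less_eq_eq zero_le)
  then obtain xs rest where W: "W = xs @ v # rest" "v \<notin> set xs" by (meson split_list_first)
  then have "count_list W v = Suc (count_list rest v)" by (simp add: count_list_0_iff)
  with Suc.prems have "Suc m \<le> count_list rest v" by simp
  from Suc.IH[OF this] obtain xs' segs ys where "rest = xs' @ concat (map (Cons v) segs) @ v # ys" "length segs = m" by blast
  then show ?case using W by (intro exI[of _ xs] exI[of _ "xs' # segs"] exI[of _ ys]) simp
qed

lemma pig: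
  fixes h :: "'a \<Rightarrow> nat"
  assumes g: "0 < g" and L: "g \<le> length L"
  shows "\<exists>kept rem. mset L = mset kept + mset rem \<and> rem \<noteq> [] \<and> (\<Sum>s\<leftarrow>rem. h s) mod g = 0"
proof -
  define f where "f t = (\<Sum>s\<leftarrow>take t L. h s) mod g" for t
  have "\<not> inj_on f {0..g}"
  proof
    assume "inj_on f {0..g}"
    moreover have "f ` {0..g} \<subseteq> {..<g}" using g by (auto simp: f_def)
    ultimately have "card {0..g} \<le> card {..<g}" by (meson card_inj_on_le finite_lessThan)
    then show False by simp
  qed
  then obtain a b where ab: "a \<in> {0..g}" "b \<in> {0..g}" "a \<noteq> b" "f a = f b" unfolding inj_on_def by blast
  have "\<exists>a b. a < b \<and> b \<le> g \<and> f a = f b"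
  proof (cases "a < b")
    case True then show ?thesis using ab by auto
  next
    case False then show ?thesis using ab by (intro exI[of _ b] exI[of _ a]) auto
  qed
  then obtain a b where ab: "a < b" "b \<le> g" "f a = f b" by blast
  define rem where "rem = drop a (take b L)"
  define kept where "kept = take a L @ drop b L"
  have tb: "take b L = take a L @ rem" unfolding rem_def
    by (metis ab(1) append_take_drop_id less_imp_le_nat min.absorb1 take_take)
  have "mset L = mset (take b L) + mset (drop b L)" by (metis append_take_drop_id mset_append)
  then have m: "mset L = mset kept + mset rem" by (simp add: tb kept_def)
  have "rem \<noteq> []" unfolding rem_def using ab L by simp
  moreover have "(\<Sum>s\<leftarrow>rem. h s) mod g = 0"
  proof -
    have "((\<Sum>s\<leftarrow>take a L. h s) + (\<Sum>s\<leftarrow>rem. h s)) mod g = (\<Sum>s\<leftarrow>take a L. h s) mod g"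
      using ab(3) by (simp add: f_def tb)
    then show ?thesis by (simp add: mod_eq_dvd_iff_nat)
  qed
  ultimately show ?thesis using m by (intro exI[of _ kept] exI[of _ rem]) simp
qed
lemma walk_sub: "is_walk n A w \<Longrightarrow> w' \<noteq> [] \<Longrightarrow> set w' \<subseteq> set w \<Longrightarrow> set (warcs w') \<subseteq> set (warcs w) \<Longrightarrow> is_walk n A w'"
  by (auto simp: is_walk_def)

lemma wweight_append: "wweight A (xs @ x # ys) = wweight A (xs @ [x]) + wweight A (x # ys)"
  unfolding wweight_def warcs_append[of xs x ys] map_append sum_list_append by (rule refl)

lemma closed_le0:
  assumes lam: "mcm n A = 0"
  shows "is_walk n A c \<Longrightarrow> 2 \<le> length c \<Longrightarrow> hd c = last c \<Longrightarrow> wweight A c \<le> 0"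
proof (induction "length c" arbitrary: c rule: less_induct)
  case less
  show ?case
  proof (cases "distinct (butlast c)")
    case True
    then have cyc: "is_cycle n A c" using less.prems by (simp add: is_cycle_def)
    then have "cmean A c \<le> mcm n A" unfolding mcm_def by (intro SUP_upper) simp
    then have le: "wweight A c / ereal (real (wlen c)) \<le> 0" using lam by (simp add: cmean_def)
    have "wlen c \<ge> 1" using less.prems by (simp add: wlen_def)
    then have p: "0 < ereal (real (wlen c))" by simp
    have ne: "ereal (real (wlen c)) \<noteq> \<infinity>" by simp
    have "wweight A c \<le> ereal (real (wlen c)) * 0"
      using le ereal_divide_le_pos[OF p ne] by blast
    then show ?thesis by simp
  next
    case False
    then obtain xs x ys zs where bl: "butlast c = xs @ [x] @ ys @ [x] @ zs" by (metis not_distinct_decomp)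
    define l where "l = last c"
    have c: "c = xs @ x # ys @ x # zs @ [l]"
      proof -
      have "c \<noteq> []" using less.prems by auto
      then have "c = butlast c @ [last c]" by simp
      then show ?thesis using bl unfolding l_def by simp
    qed
    define I where "I = x # ys @ [x]"
    define Ow where "Ow = xs @ x # zs @ [l]"
    have ac: "warcs c = warcs (xs @ [x]) @ warcs I @ warcs (x # zs @ [l])"
      unfolding c I_def using warcs_append[of xs x "ys @ x # zs @ [l]"] warcs_append[of "x # ys" x "zs @ [l]"] by simp
    have aO: "warcs Ow = warcs (xs @ [x]) @ warcs (x # zs @ [l])"
      unfolding Ow_def using warcs_append[of xs x "zs @ [l]"] by simp
    have wc: "wweight A c = wweight A Ow + wweight A I"
      proof -
      have e1: "wweight A c = wweight A (xs @ [x]) + (wweight A I + wweight A (x # zs @ [l]))"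
        unfolding wweight_def ac map_append sum_list_append by (rule refl)
      have e2: "wweight A Ow = wweight A (xs @ [x]) + wweight A (x # zs @ [l])"
        unfolding wweight_def aO map_append sum_list_append by (rule refl)
      have ac3: "\<And>a b d::ereal. a + (b + d) = (a + d) + b" by (metis add.assoc add.commute)
      show ?thesis unfolding e1 e2 by (rule ac3)
    qed
    have hdc: "hd c = hd Ow" unfolding c Ow_def by (cases xs) auto
    have wI: "wweight A I \<le> 0"
    proof (rule less.hyps)
      show "length I < length c" unfolding I_def c by simp
      have s1: "set I \<subseteq> set c" unfolding I_def by (subst c) auto
      have s2: "set (warcs I) \<subseteq> set (warcs c)" unfolding ac by auto
      show "is_walk n A I" by (rule walk_sub[OF less.prems(1) _ s1 s2]) (simp add: I_def)
      show "2 \<le> length I" by (simp add: I_def)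
      show "hd I = last I" by (simp add: I_def)
    qed
    moreover have wO: "wweight A Ow \<le> 0"
    proof (rule less.hyps)
      show "length Ow < length c" unfolding Ow_def c by simp
      have s1: "set Ow \<subseteq> set c" unfolding Ow_def by (subst c) auto
      have s2: "set (warcs Ow) \<subseteq> set (warcs c)" unfolding ac aO by auto
      show "is_walk n A Ow" by (rule walk_sub[OF less.prems(1) _ s1 s2]) (simp add: Ow_def)
      show "2 \<le> length Ow" by (simp add: Ow_def)
      show "hd Ow = last Ow" using hdc less.prems(3) by (simp add: Ow_def l_def)
    qed
    have "wweight A Ow + wweight A I \<le> 0 + 0" by (rule add_mono[OF wO wI])
    then show ?thesis using wc by simp
  qed
qed
lemma msum:
  fixes f :: "'a \<Rightarrow> 'b::comm_monoid_add"
  assumes "mset xs = mset ys + mset zs"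
  shows "(\<Sum>s\<leftarrow>xs. f s) = (\<Sum>s\<leftarrow>ys. f s) + (\<Sum>s\<leftarrow>zs. f s)"
proof -
  have "\<And>l. (\<Sum>s\<leftarrow>l. f s) = sum_mset (image_mset f (mset l))"
    by (metis mset_map sum_mset_sum_list)
  then show ?thesis using assms by simp
qed

lemma sum_list_concat': "sum_list (concat xss) = sum_list (map sum_list (xss :: 'b::monoid_add list list))"
  by (induction xss) auto

lemma sumF:
  fixes f :: "nat \<times> nat \<Rightarrow> 'b::comm_monoid_add"
  shows "sum_list (map f (warcs (xs @ concat (map (Cons v) segs) @ v # ys))) =
    sum_list (map f (warcs (xs @ [v]))) + (\<Sum>s\<leftarrow>segs. sum_list (map f (warcs (v # s @ [v]))))
     + sum_list (map f (warcs (v # ys)))"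
  unfolding warcs_F by (simp add: sum_list_concat' map_concat o_def add.assoc)

lemma lenF:
  "wlen (xs @ concat (map (Cons v) segs) @ v # ys) =
    wlen (xs @ [v]) + (\<Sum>s\<leftarrow>segs. Suc (length s)) + wlen (v # ys)"
  unfolding wlen_warcs warcs_F by (simp add: length_concat o_def wlen_def[symmetric] wlen_warcs[symmetric])
    (simp add: wlen_def)

lemma hdF: "hd (concat (map (Cons v) segs) @ v # ys) = v" by (cases segs) auto

lemma removal:
  assumes TO: "twice_optimal n A Z0 g W"
    and lam: "mcm n A = 0"
    and WD: "W = xs @ concat (map (Cons v) segs) @ v # ys"
    and M: "mset segs = mset kept + mset rem" and R: "rem \<noteq> []"
    and Rm: "(\<Sum>s\<leftarrow>rem. Suc (length s)) mod g = 0"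
    and Z: "set (xs @ concat (map (Cons v) kept) @ v # ys) \<inter> set Z0 \<noteq> {}"
  shows False
proof -
  define W' where "W' = xs @ concat (map (Cons v) kept) @ v # ys"
  have aW: "warcs W = warcs (xs @ [v]) @ concat (map (\<lambda>s. warcs (v # s @ [v])) segs) @ warcs (v # ys)"
    unfolding WD by (rule warcs_F)
  have aW': "warcs W' = warcs (xs @ [v]) @ concat (map (\<lambda>s. warcs (v # s @ [v])) kept) @ warcs (v # ys)"
    unfolding W'_def by (rule warcs_F)
  have sk: "set kept \<subseteq> set segs" using M by (metis Un_upper1 set_mset_mset set_mset_union)
  have sr: "set rem \<subseteq> set segs" using M by (metis Un_upper2 set_mset_mset set_mset_union)
  have walkW: "is_walk n A W" using TO by (simp add: twice_optimal_def)
  have s1: "set W' \<subseteq> set W" unfolding W'_def WD using sk by auto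
  have s2: "set (warcs W') \<subseteq> set (warcs W)" unfolding aW aW' using sk by auto
  have wW': "is_walk n A W'" by (rule walk_sub[OF walkW _ s1 s2]) (simp add: W'_def)
  have hdW: "hd W' = hd W" unfolding W'_def WD by (cases xs) (simp_all add: hdF)
  have lastW: "last W' = last W" by (simp add: W'_def WD)
  define p where "p = wlen (xs @ [v])"
  define q where "q = wlen (v # ys)"
  define kl where "kl = (\<Sum>s\<leftarrow>kept. Suc (length s))"
  define rl where "rl = (\<Sum>s\<leftarrow>rem. Suc (length s))"
  have lW: "wlen W = p + (kl + rl) + q" unfolding WD lenF p_def q_def kl_def rl_def using msum[OF M] by simp
  have lW': "wlen W' = p + kl + q" unfolding W'_def lenF p_def q_def kl_def by simp
  obtain k where rk: "rl = g * k" using Rm unfolding rl_def by (metis mod_eq_0_iff_dvd dvdE)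
  have "wlen W' mod g = wlen W mod g" unfolding lW lW' rk
    by (metis add.assoc add.commute mod_mult_self2)
  then have comp: "comparable_walk n A Z0 g W W'"
    unfolding comparable_walk_def using wW' hdW lastW Z W'_def by simp
  define f where "f = (\<lambda>(i::nat, j::nat). A i j)"
  define a where "a = sum_list (map f (warcs (xs @ [v])))"
  define b where "b = sum_list (map f (warcs (v # ys)))"
  define wk where "wk = (\<Sum>s\<leftarrow>kept. sum_list (map f (warcs (v # s @ [v]))))"
  define wr where "wr = (\<Sum>s\<leftarrow>rem. sum_list (map f (warcs (v # s @ [v]))))"
  have eW: "wweight A W = a + (wk + wr) + b"
    unfolding wweight_def f_def[symmetric] WD sumF a_def b_def wk_def wr_def msum[OF M] by (rule refl)
  have eW': "wweight A W' = a + wk + b"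
    unfolding wweight_def f_def[symmetric] W'_def sumF a_def b_def wk_def by (rule refl)
  have "wr \<le> 0" unfolding wr_def
  proof (rule sum_list_nonpos)
    fix x assume "x \<in> set (map (\<lambda>s. sum_list (map f (warcs (v # s @ [v])))) rem)"
    then obtain s where s: "s \<in> set rem" and x: "x = sum_list (map f (warcs (v # s @ [v])))" by auto
    have ss: "s \<in> set segs" using s sr by auto
    have w1: "set (v # s @ [v]) \<subseteq> set W" unfolding WD using ss by auto
    have w2: "set (warcs (v # s @ [v])) \<subseteq> set (warcs W)" unfolding aW using ss by auto
    have "is_walk n A (v # s @ [v])" by (rule walk_sub[OF walkW _ w1 w2]) simp
    then have "wweight A (v # s @ [v]) \<le> 0" by (rule closed_le0[OF lam]) auto
    then show "x \<le> 0" unfolding x wweight_def f_def .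
  qed
  then have "wk + wr \<le> wk + 0" by (rule add_mono[OF order_refl])
  then have "a + (wk + wr) + b \<le> a + (wk + 0) + b" by (rule add_mono[OF add_mono[OF order_refl] order_refl])
  then have le1: "wweight A W \<le> wweight A W'" unfolding eW eW' by simp
  have le2: "wweight A W' \<le> wweight A W" using TO comp unfolding twice_optimal_def by blast
  have "wlen W \<le> wlen W'" using TO comp le1 le2 unfolding twice_optimal_def by (meson order_antisym)
  moreover have "rl \<ge> 1" using R unfolding rl_def by (cases rem) auto
  ultimately show False unfolding lW lW' by simp
qed
theorem lemmal:
  fixes n :: nat and A :: mpmat and Z0 W :: "nat list" and g :: nat
  assumes fin: "\<forall>i j. A i j \<noteq> \<infinity>"
    and lam: "mcm n A = 0"
    and g_def: "g = g_crit n A"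
    and T1: "\<exists>T. is_T1 n A T \<and> int T = DM g n"
    and Z0: "crit_graph_cycle n A Z0" "wlen Z0 = g"
    and uniq: "\<forall>c. crit_graph_cycle n A c \<and> wlen c = g \<longrightarrow>
                 (\<exists>k. butlast c = rotate k (butlast Z0))"
    and W: "interesting n A Z0 g W"
  shows "(\<forall>v\<in>set Z0. count_list W v = g) \<and>
         (\<forall>v<n. v \<notin> set Z0 \<longrightarrow> count_list W v = g + 1)"
proof -
  have TO: "twice_optimal n A Z0 g W" and lenW: "int (wlen W) = DM g n + int g - 1"
    using W by (auto simp: interesting_def)
  have walkW: "is_walk n A W" using TO by (simp add: twice_optimal_def)
  have cyc: "is_cycle n A Z0" using Z0(1) by (simp add: crit_graph_cycle_def)
  have g1: "1 \<le> g" using cyc Z0(2) unfolding is_cycle_def wlen_def by linarith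
  have g0: "0 < g" using g1 by simp
  have Z0n: "set Z0 \<subseteq> {..<n}" using cyc by (simp add: is_cycle_def is_walk_def)
  have cardZ: "card (set Z0) = g"
  proof -
    have ne: "Z0 \<noteq> []" and l2: "2 \<le> length Z0" and hl: "hd Z0 = last Z0" and di: "distinct (butlast Z0)"
      using cyc by (auto simp: is_cycle_def is_walk_def)
    have e: "Z0 = butlast Z0 @ [last Z0]" using ne by simp
    have bne: "butlast Z0 \<noteq> []" using l2 by (cases Z0) auto
    have "hd (butlast Z0) = hd Z0" using bne e by (metis hd_append)
    then have "last Z0 \<in> set (butlast Z0)" using bne hl by (metis hd_in_set)
    then have "set Z0 = set (butlast Z0)" using e by (metis Un_insert_right append_Nil2 insert_absorb list.simps(15) set_append)
    then show ?thesis using di Z0(2) by (simp add: distinct_card wlen_def)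
  qed
  have gn: "g \<le> n" using cardZ Z0n by (metis card_lessThan card_mono finite_lessThan)
  have b1: "count_list W v \<le> g" if v: "v \<in> set Z0" for v
  proof (rule ccontr)
    assume "\<not> count_list W v \<le> g"
    then have "Suc g \<le> count_list W v" by simp
    from decomp[OF this] obtain xs segs ys where WD: "W = xs @ concat (map (Cons v) segs) @ v # ys" and ls: "length segs = g" by blast
    from pig[OF g0, of segs "\<lambda>s. Suc (length s)"] ls obtain kept rem where
      M: "mset segs = mset kept + mset rem" "rem \<noteq> []" "(\<Sum>s\<leftarrow>rem. Suc (length s)) mod g = 0" by auto
    show False
      by (rule removal[OF TO lam WD M]) (use v in auto)
  qed
  have b2: "count_list W v \<le> g + 1" if v: "v \<notin> set Z0" for v
  proof (rule ccontr)
    assume "\<not> count_list W v \<le> g + 1"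
    then have "Suc (Suc g) \<le> count_list W v" by simp
    from decomp[OF this] obtain xs segs ys where WD: "W = xs @ concat (map (Cons v) segs) @ v # ys" and ls: "length segs = Suc g" by blast
    obtain z where z: "z \<in> set W" "z \<in> set Z0" using TO by (auto simp: twice_optimal_def)
    have zv: "z \<noteq> v" using z v by auto
    show False
    proof (cases "z \<in> set xs \<or> z \<in> set ys")
      case True
      from pig[OF g0, of segs "\<lambda>s. Suc (length s)"] ls obtain kept rem where
        M: "mset segs = mset kept + mset rem" "rem \<noteq> []" "(\<Sum>s\<leftarrow>rem. Suc (length s)) mod g = 0" by auto
      show False
        by (rule removal[OF TO lam WD M]) (use True z in auto)
    next
      case False
      then have "z \<in> set (concat (map (Cons v) segs))" using z(1) WD zv by auto
      then obtain s where s: "s \<in> set segs" "z \<in> set s" using zv by (auto split: if_splits)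
      then obtain L1 L2 where sp: "segs = L1 @ s # L2" by (meson split_list)
      have "g \<le> length (L1 @ L2)" using ls sp by simp
      from pig[OF g0 this, of "\<lambda>s. Suc (length s)"] obtain kept rem where
        M: "mset (L1 @ L2) = mset kept + mset rem" "rem \<noteq> []" "(\<Sum>s\<leftarrow>rem. Suc (length s)) mod g = 0" by auto
      have M': "mset segs = mset (s # kept) + mset rem" using M(1) sp by simp
      show False
        by (rule removal[OF TO lam WD M' M(2,3)]) (use s z in auto)
    qed
  qed
  have nW: "W \<noteq> []" and sW: "set W \<subseteq> {..<n}" using walkW by (auto simp: is_walk_def)
  have lenW': "length W = Suc (wlen W)" using nW by (simp add: wlen_def)
  have n1: "1 \<le> n" using gn g1 by simp
  have wl: "wlen W = (g + 1) * (n - 1)"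
  proof -
    obtain m where nm: "n = Suc m" using n1 by (cases n) auto
    have "int (wlen W) = int ((g + 1) * m)" using lenW by (simp add: DM_def nm algebra_simps)
    then have "wlen W = (g + 1) * m" using of_nat_eq_iff by blast
    then show ?thesis by (simp add: nm)
  qed
  obtain d where nd: "n = g + d" using gn le_Suc_ex by blast
  obtain g' where gg: "g = Suc g'" using g1 by (cases g) auto
  have tot: "length W = g * g + (g + 1) * d" unfolding lenW' wl nd gg by (simp add: algebra_simps)
  define S1 where "S1 = (\<Sum>v\<in>set Z0. count_list W v)"
  define S2 where "S2 = (\<Sum>v\<in>{..<n} - set Z0. count_list W v)"
  have "length W = (\<Sum>v\<in>{..<n}. count_list W v)" using sum_count_set[OF sW] by simp
  also have "\<dots> = S1 + S2" unfolding S1_def S2_def using Z0n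
    by (metis add.commute finite_lessThan sum.subset_diff)
  finally have tS: "length W = S1 + S2" .
  have cd: "card ({..<n} - set Z0) = d" using Z0n cardZ nd by (simp add: card_Diff_subset)
  have S1le: "S1 \<le> g * g" unfolding S1_def using b1 sum_mono[of "set Z0" "count_list W" "\<lambda>_. g"] cardZ by simp
  have S2le: "S2 \<le> (g + 1) * d" unfolding S2_def using b2 sum_mono[of "{..<n} - set Z0" "count_list W" "\<lambda>_. g + 1"] cd
    by (simp add: mult.commute)
  have S1e: "S1 = g * g" and S2e: "S2 = (g + 1) * d" using tS tot S1le S2le by linarith+
  show ?thesis
  proof (intro conjI ballI allI impI)
    fix v assume v: "v \<in> set Z0"
    show "count_list W v = g"
    proof (rule ccontr)
      assume "count_list W v \<noteq> g"
      then have lt: "count_list W v < g" using b1 v by (simp add: order_less_le)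
      have "S1 < (\<Sum>v\<in>set Z0. g)" unfolding S1_def
        by (rule sum_strict_mono_ex1) (use b1 v lt in auto)
      then show False using S1e cardZ by simp
    qed
  next
    fix v assume v: "v < n" "v \<notin> set Z0"
    show "count_list W v = g + 1"
    proof (rule ccontr)
      assume "count_list W v \<noteq> g + 1"
      then have lt: "count_list W v < g + 1" using b2 v by (simp add: order_less_le)
      have "S2 < (\<Sum>v\<in>{..<n} - set Z0. g + 1)" unfolding S2_def
        by (rule sum_strict_mono_ex1) (use b2 v lt in auto)
      then show False using S2e cd by (simp add: mult.commute)
    qed
  qed
qed

end
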